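(* Let $\mathcal{C}_{\mathbf{P}\boldsymbol{G}_N}(\mathcal{A})$ be an upper polynomial polar code and let $f$ be the monomial with $\operatorname{ev}(f)=\boldsymbol{G}_N[i]$ for some $i\in[0,2^m-1]$. Then for all $j>i$, $\operatorname{ev}(\check{f})\cdot (\mathbf{P}\boldsymbol{G}_N)[j]=0$.
   Context: Let $m\ge1$, $N=2^m$, $\mathbf{R}_m=\mathbb{F}_2[x_0,\dots,x_{m-1}]/(x_0^2-x_0,\dots,x_{m-1}^2-x_{m-1})$, and $\operatorname{ev}(Q)$ the evaluation vector of $Q\in\mathbf{R}_m$ at all points of $\mathbb{F}_2^m$. Let $\boldsymbol{G}_N=\begin{pmatrix}1&0\\1&1\end{pmatrix}^{\otimes m}$; row $i$ of $\boldsymbol{G}_N$, denoted $\boldsymbol{G}_N[i]$, is $\operatorname{ev}$ of the monomial $x_0^{b_0}\cdots x_{m-1}^{b_{m-1}}$ with $(b_0,\dots,b_{m-1})$ the binary expansion of $2^m-1-i$. An upper polynomial polar code $\mathcal{C}_{\mathbf{P}\boldsymbol{G}_N}(\mathcal{A})$ is the code spanned by the rows of $\mathbf{P}\boldsymbol{G}_N$ indexed by $\mathcal{A}\subseteq[0,N-1]$, where $\mathbf{P}\in\mathbb{F}_2^{N\times N}$ is upper triangular with ones on the diagonal. For a monomial $f$, $\check{f}=x_0\cdots x_{m-1}/f$ is its multiplicative complement. The dot denotes the scalar product over $\mathbb{F}_2$. *)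

theory Defs
  imports Main "HOL-Library.Z2"
begin

text \<open>F_2 is the type bit (a field). Vectors of length N = 2^m are functions
  nat => bit on indices < 2^m; N x N matrices are functions nat => nat => bit.\<close>

definition G2 :: "nat \<Rightarrow> nat \<Rightarrow> bit" where
  "G2 r c = (if r = 0 \<and> c = 1 then 0 else 1)"

text \<open>m-fold Kronecker power G_N (A tensor B with A the outer factor).\<close>
fun Gmat :: "nat \<Rightarrow> nat \<Rightarrow> nat \<Rightarrow> bit" where
  "Gmat 0 i k = 1"
| "Gmat (Suc m) i k = G2 (i div 2^m) (k div 2^m) * Gmat m (i mod 2^m) (k mod 2^m)"

definition digit :: "nat \<Rightarrow> nat \<Rightarrow> bool" where
  "digit n t = odd (n div 2^t)"

text \<open>A monomial of R_m is x_t for t in S, with S a subset of {0..<m}.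
  Evaluation vector: the k-th point of F_2^m is the one with x_t = digit t of (2^m-1-k);
  with this ordering, row i of Gmat m is ev of the monomial with exponents
  the binary digits of 2^m-1-i, as in the paper.\<close>
definition ev_mono :: "nat \<Rightarrow> nat set \<Rightarrow> nat \<Rightarrow> bit" where
  "ev_mono m S k = of_bool (\<forall>t\<in>S. digit (2^m - 1 - k) t)"

text \<open>Multiplicative complement x_0...x_{m-1} / f.\<close>
definition mono_compl :: "nat \<Rightarrow> nat set \<Rightarrow> nat set" where
  "mono_compl m S = {..<m} - S"

definition dot :: "nat \<Rightarrow> (nat \<Rightarrow> bit) \<Rightarrow> (nat \<Rightarrow> bit) \<Rightarrow> bit" where
  "dot N a b = (\<Sum>k<N. a k * b k)"

definition PG_row :: "nat \<Rightarrow> (nat \<Rightarrow> nat \<Rightarrow> bit) \<Rightarrow> nat \<Rightarrow> nat \<Rightarrow> bit" where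
  "PG_row m P j k = (\<Sum>l<2^m. P j l * Gmat m l k)"

definition upper_unitriangular :: "nat \<Rightarrow> (nat \<Rightarrow> nat \<Rightarrow> bit) \<Rightarrow> bool" where
  "upper_unitriangular N P \<longleftrightarrow>
     (\<forall>r<N. \<forall>c<N. c < r \<longrightarrow> P r c = 0) \<and> (\<forall>r<N. P r r = 1)"

end

theory Submission
  imports Defs
begin
lemma digit_bit: "digit n t = bit n t" by (simp add: digit_def bit_iff_odd)
lemma digit_compl:
  assumes "k < 2^m" "t < m" shows "digit (2^m - 1 - k) t \<longleftrightarrow> \<not> digit k t"
proof -
  have "int (2^m - 1 - k) = take_bit m (not (int k))"
  proof -
    have "take_bit m (int k) = int k" using assms by (simp add: take_bit_int_eq_self_iff)
    moreover have "1 + k \<le> 2^m" using assms by simp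
    moreover have "take_bit m (not (int k)) = mask m - take_bit m (int k)" using take_bit_not_eq_mask_diff[where ?a="int k" and ?n=m] by simp
    ultimately show ?thesis by (simp add: mask_eq_exp_minus_1 of_nat_diff)
  qed
  then have "bit (2^m - 1 - k) t = bit (take_bit m (not (int k))) t"
    by (metis bit_of_nat_iff_bit)
  then show ?thesis using assms by (simp add: digit_bit bit_take_bit_iff bit_not_iff bit_of_nat_iff_bit)
qed

lemma sum_split2:
  fixes f :: "nat \<Rightarrow> 'a::comm_monoid_add"
  shows "(\<Sum>k<2*n. f k) = (\<Sum>k<n. f k) + (\<Sum>k<n. f (n+k))"
proof -
  have "(\<Sum>k<2*n. f k) = sum f {0..<n} + sum f {n..<n+n}"
    by (simp add: lessThan_atLeast0 sum.atLeastLessThan_concat mult_2)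
  also have "sum f {n..<n+n} = sum f {0+n..<n+n}" by simp
  also have "\<dots> = sum (f \<circ> plus n) {0..<n}" by (rule sum.atLeastLessThan_shift_bounds)
  finally show ?thesis by (simp add: lessThan_atLeast0 comp_def)
qed

lemma digit_mod: "t < m \<Longrightarrow> digit (x mod 2^m) t = digit x t"
  by (simp add: digit_bit flip: take_bit_eq_mod add: bit_take_bit_iff)

lemma digit_top: "x < 2^Suc m \<Longrightarrow> digit x m \<longleftrightarrow> x div 2^m = 1"
proof -
  assume "x < 2^Suc m"
  then have "x div 2^m < 2" by (simp add: less_mult_imp_div_less)
  then have "x div 2^m = 0 \<or> x div 2^m = 1" by auto
  then show ?thesis by (auto simp: digit_def)
qed

lemma Gmat_char:
  "a < 2^m \<Longrightarrow> k < 2^m \<Longrightarrow> Gmat m a k = of_bool (\<forall>t<m. digit k t \<longrightarrow> digit a t)"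
proof (induction m arbitrary: a k)
  case 0
  then show ?case by simp
next
  case (Suc m)
  have a: "a div 2^m < 2" "k div 2^m < 2" using Suc.prems by (auto simp: less_mult_imp_div_less)
  have IH: "Gmat m (a mod 2^m) (k mod 2^m) = of_bool (\<forall>t<m. digit k t \<longrightarrow> digit a t)"
    using Suc.IH[of "a mod 2^m" "k mod 2^m"] by (simp add: digit_mod)
  have "(\<forall>t<Suc m. digit k t \<longrightarrow> digit a t) \<longleftrightarrow> (\<forall>t<m. digit k t \<longrightarrow> digit a t) \<and> (digit k m \<longrightarrow> digit a m)"
    by (auto simp: less_Suc_eq)
  moreover have "G2 (a div 2^m) (k div 2^m) = of_bool (digit k m \<longrightarrow> digit a m)"
    using a digit_top[OF Suc.prems(1)] digit_top[OF Suc.prems(2)]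
    by (auto simp: G2_def less_2_cases_iff)
  ultimately show ?case using IH by auto
qed

lemma SG:
  "a < 2^m \<Longrightarrow> b < 2^m \<Longrightarrow> (\<Sum>k<2^m. Gmat m a k * Gmat m b k) = of_bool (\<forall>t<m. \<not> (digit a t \<and> digit b t))"
proof (induction m arbitrary: a b)
  case 0
  then show ?case by simp
next
  case (Suc m)
  have a: "a div 2^m < 2" "b div 2^m < 2" using Suc.prems by (auto simp: less_mult_imp_div_less)
  have IH: "(\<Sum>k<2^m. Gmat m (a mod 2^m) k * Gmat m (b mod 2^m) k) = of_bool (\<forall>t<m. \<not> (digit a t \<and> digit b t))"
    using Suc.IH[of "a mod 2^m" "b mod 2^m"] by (simp add: digit_mod)
  have e1: "(\<Sum>k<2^m. Gmat (Suc m) a k * Gmat (Suc m) b k) = (\<Sum>k<2^m. Gmat m (a mod 2^m) k * Gmat m (b mod 2^m) k)"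
    by (rule sum.cong) (auto simp: G2_def)
  have hh: "\<And>x::nat. x < 2^m \<Longrightarrow> (2^m+x) div 2^m = 1 \<and> (2^m+x) mod 2^m = x" by (simp add: div_add_self1)
  have e2: "(\<Sum>k<2^m. Gmat (Suc m) a (2^m+k) * Gmat (Suc m) b (2^m+k)) = of_bool (digit a m \<and> digit b m) * (\<Sum>k<2^m. Gmat m (a mod 2^m) k * Gmat m (b mod 2^m) k)"
    unfolding sum_distrib_left
    using hh
    using a digit_top[OF Suc.prems(1)] digit_top[OF Suc.prems(2)]
    by (intro sum.cong) (auto simp: G2_def less_2_cases_iff)
  have "(\<forall>t<Suc m. \<not> (digit a t \<and> digit b t)) \<longleftrightarrow> (\<forall>t<m. \<not> (digit a t \<and> digit b t)) \<and> \<not> (digit a m \<and> digit b m)"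
    by (auto simp: less_Suc_eq)
  then show ?case
    using sum_split2[of "\<lambda>k. Gmat (Suc m) a k * Gmat (Suc m) b k" "2^m"] e1 e2 IH
    by auto
qed

lemma sub_le:
  assumes "\<forall>t. digit a t \<longrightarrow> digit b t" shows "a \<le> (b::nat)"
proof -
  have "and a b = a" using assms by (auto simp: bit_eq_iff bit_and_iff digit_bit)
  then have "int a = and (int a) (int b)" by (metis of_nat_and_eq)
  also have "\<dots> \<le> int b" by simp
  finally show ?thesis by simp
qed

lemma digit_high: "(a::nat) < 2^m \<Longrightarrow> m \<le> t \<Longrightarrow> \<not> digit a t"
proof -
  assume "a < 2^m" "m \<le> t"
  then have "a < 2^t" using power_increasing[of m t "2::nat"] by linarith
  then show ?thesis by (simp add: digit_def)
qed

lemma digit_pow: "digit (2^t) s \<longleftrightarrow> s = t"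
  by (simp add: digit_bit bit_exp_iff)

theorem lemma4:
  fixes m :: nat and P :: "nat \<Rightarrow> nat \<Rightarrow> bit" and A :: "nat set"
    and S :: "nat set" and i :: nat
  assumes "m \<ge> 1"
    and "upper_unitriangular (2^m) P"
    and "A \<subseteq> {..<2^m}"
    and "S \<subseteq> {..<m}"
    and "i < 2^m"
    and "\<forall>k<2^m. ev_mono m S k = Gmat m i k"
  shows "\<forall>j. i < j \<and> j < 2^m \<longrightarrow>
           dot (2^m) (ev_mono m (mono_compl m S)) (PG_row m P j) = 0"
proof (intro allI impI)
  fix j assume j: "i < j \<and> j < 2^m"
  have T: "mono_compl m S = {t. t < m \<and> digit i t}"
  proof -
    have "t \<notin> S \<longleftrightarrow> digit i t" if t: "t < m" for t
    proof -
      have k: "(2::nat)^t < 2^m" using t by simp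
      have "ev_mono m S (2^t) = of_bool (t \<notin> S)"
        unfolding ev_mono_def using assms(4) digit_compl[OF k] digit_pow by auto
      moreover have "Gmat m i (2^t) = of_bool (digit i t)"
        using Gmat_char[OF assms(5) k] digit_pow t by auto
      ultimately show ?thesis using assms(6) k by (simp add: of_bool_eq_iff)
    qed
    then show ?thesis unfolding mono_compl_def using assms(4) by auto
  qed
  define i' where "i' = 2^m - 1 - i"
  have i': "i' < 2^m" unfolding i'_def using assms(5) by simp
  have E: "ev_mono m (mono_compl m S) k = Gmat m i' k" if k: "k < 2^m" for k
  proof -
    have "ev_mono m (mono_compl m S) k = of_bool (\<forall>t<m. digit k t \<longrightarrow> \<not> digit i t)"
      unfolding ev_mono_def T using digit_compl[OF k] by auto
    also have "\<dots> = Gmat m i' k"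
    proof -
      have "\<forall>t<m. digit i' t \<longleftrightarrow> \<not> digit i t" unfolding i'_def using digit_compl[OF assms(5)] by auto
      then show ?thesis unfolding Gmat_char[OF i' k] by (auto simp: of_bool_eq_iff)
    qed
    finally show ?thesis .
  qed
  have "dot (2^m) (ev_mono m (mono_compl m S)) (PG_row m P j)
      = (\<Sum>k<2^m. \<Sum>l<2^m. P j l * (Gmat m i' k * Gmat m l k))"
    unfolding dot_def PG_row_def sum_distrib_left
    by (intro sum.cong refl) (auto simp: E ac_simps)
  also have "\<dots> = (\<Sum>l<2^m. P j l * (\<Sum>k<2^m. Gmat m i' k * Gmat m l k))"
    by (subst sum.swap) (simp only: sum_distrib_left)
  also have "\<dots> = (\<Sum>l<(2::nat)^m. (0::bit))"
  proof (intro sum.cong refl)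
    fix l :: nat assume l: "l \<in> {..<2^m}"
    show "P j l * (\<Sum>k<2^m. Gmat m i' k * Gmat m l k) = 0"
    proof (cases "l < j")
      case True
      then show ?thesis using assms(2) j l unfolding upper_unitriangular_def by auto
    next
      case False
      have "\<not> (\<forall>t<m. \<not> (digit i' t \<and> digit l t))"
      proof
        assume H: "\<forall>t<m. \<not> (digit i' t \<and> digit l t)"
        have "\<forall>t. digit l t \<longrightarrow> digit i t"
        proof (intro allI impI)
          fix t assume d: "digit l t"
          have "t < m" using digit_high[of l m t] l d by force
          then show "digit i t" using H d digit_compl[OF assms(5)] unfolding i'_def by auto
        qed
        then have "l \<le> i" by (rule sub_le)
        then show False using False j by simp
      qed
      then show ?thesis using SG[OF i', of l] l by simp
    qed
  qed
  finally show "dot (2^m) (ev_mono m (mono_compl m S)) (PG_row m P j) = 0" by simp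
qed

end
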